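(* Let $n$ and $m$ be integers with $n\geq 2$ and $1\leq m\leq\binom{n}{2}$. A two-terminal graph $G\in T_{n,m}$ is a $1$-uniformly most reliable two-terminal graph ($1$-UMRTTG) if and only if the edge $st$ joining its terminals belongs to $G$.
   Context: All graphs are finite, simple and undirected. A two-terminal graph is a graph $G$ together with two distinguished vertices $s,t$ (the terminals). Two two-terminal graphs are isomorphic if there is a graph isomorphism between them mapping the set of terminals onto the set of terminals. $T_{n,m}$ denotes the set of all pairwise nonisomorphic two-terminal graphs with $n$ vertices and $m$ edges. For a positive integer $d$, a $d$-pathset of a two-terminal graph $G$ is a spanning subgraph of $G$ containing a path of length (number of edges) at most $d$ joining $s$ and $t$. For $\rho\in[0,1]$, $R_G^d(\rho)$ is the probability that the random spanning subgraph obtained from $G$ by deleting each edge independently with probability $\rho$ is a $d$-pathset. A graph $G\in T_{n,m}$ is a $d$-UMRTTG if $R_G^d(\rho)\geq R_H^d(\rho)$ for every $H\in T_{n,m}$ and every $\rho\in[0,1]$. *)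

theory Defs
  imports Complex_Main
begin

definition two_terminal :: "'a set \<Rightarrow> 'a set set \<Rightarrow> 'a \<Rightarrow> 'a \<Rightarrow> bool" where
  "two_terminal V E s t \<longleftrightarrow> finite V \<and>
     E \<subseteq> {{u, v} | u v. u \<in> V \<and> v \<in> V \<and> u \<noteq> v} \<and>
     s \<in> V \<and> t \<in> V \<and> s \<noteq> t"

definition is_path :: "'a set set \<Rightarrow> 'a \<Rightarrow> 'a \<Rightarrow> 'a list \<Rightarrow> bool" where
  "is_path F s t p \<longleftrightarrow> p \<noteq> [] \<and> hd p = s \<and> last p = t \<and> distinct p \<and>
     (\<forall>i. Suc i < length p \<longrightarrow> {p ! i, p ! Suc i} \<in> F)"

definition d_pathset :: "'a set set \<Rightarrow> 'a \<Rightarrow> 'a \<Rightarrow> nat \<Rightarrow> 'a set set \<Rightarrow> bool" where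
  "d_pathset E s t d F \<longleftrightarrow> F \<subseteq> E \<and> (\<exists>p. is_path F s t p \<and> length p - 1 \<le> d)"

text \<open>Probability that deleting each edge independently with probability rho
  leaves a d-pathset.\<close>
definition reliability :: "'a set set \<Rightarrow> 'a \<Rightarrow> 'a \<Rightarrow> nat \<Rightarrow> real \<Rightarrow> real" where
  "reliability E s t d \<rho> =
     (\<Sum>F \<in> {F. F \<subseteq> E \<and> d_pathset E s t d F}.
        (1 - \<rho>) ^ card F * \<rho> ^ (card E - card F))"

text \<open>Reliability is invariant under
  isomorphism, and every two-terminal graph with n vertices is isomorphic to one
  whose vertices lie in the same type as those of G (which has at least n elements),
  so comparing with all such graphs is the same as comparing with all of T_{n,m}.\<close>
definition UMRTTG :: "nat \<Rightarrow> nat \<Rightarrow> nat \<Rightarrow> 'a set \<Rightarrow> 'a set set \<Rightarrow> 'a \<Rightarrow> 'a \<Rightarrow> bool" where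
  "UMRTTG n m d V E s t \<longleftrightarrow>
     two_terminal V E s t \<and> card V = n \<and> card E = m \<and>
     (\<forall>(V'::'a set) E' s' t'. two_terminal V' E' s' t' \<and> card V' = n \<and> card E' = m \<longrightarrow>
        (\<forall>\<rho>::real. 0 \<le> \<rho> \<and> \<rho> \<le> 1 \<longrightarrow>
           reliability E s t d \<rho> \<ge> reliability E' s' t' d \<rho>))"

end

theory Submission
  imports Defs
begin

lemma pathset1_iff:
  assumes "s \<noteq> t"
  shows "d_pathset E s t 1 F \<longleftrightarrow> F \<subseteq> E \<and> {s, t} \<in> F"
proof
  assume h: "d_pathset E s t 1 F"
  then obtain p where p: "is_path F s t p" "length p - 1 \<le> 1" and FE: "F \<subseteq> E"
    unfolding d_pathset_def by blast
  have ne: "p \<noteq> []" and hd: "hd p = s" and la: "last p = t"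
    and ed: "\<forall>i. Suc i < length p \<longrightarrow> {p ! i, p ! Suc i} \<in> F"
    using p(1) unfolding is_path_def by auto
  have "length p \<noteq> 1"
  proof
    assume "length p = 1"
    then obtain x where "p = [x]" by (metis One_nat_def length_0_conv length_Suc_conv)
    then show False using hd la assms by simp
  qed
  moreover have "length p > 0" using ne by simp
  ultimately have l2: "length p = 2" using p(2) by linarith
  then obtain x y where pxy: "p = [x, y]"
    by (metis (no_types, lifting) One_nat_def Suc_1 length_0_conv length_Suc_conv)
  with hd la have "p = [s, t]" by simp
  moreover have "{p ! 0, p ! Suc 0} \<in> F" using ed l2 by simp
  ultimately have "{s, t} \<in> F" by simp
  with FE show "F \<subseteq> E \<and> {s, t} \<in> F" by blast
next
  assume "F \<subseteq> E \<and> {s, t} \<in> F"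
  moreover have "is_path F s t [s, t]" if "{s, t} \<in> F"
    using assms that unfolding is_path_def
    by (auto simp: less_Suc_eq)
  ultimately have "F \<subseteq> E" "is_path F s t [s, t]" by auto
  then show "d_pathset E s t 1 F" unfolding d_pathset_def
    by (intro conjI exI[of _ "[s, t]"]) auto
qed

lemma sum_pow_binom:
  fixes a b :: real
  assumes "finite A"
  shows "(\<Sum>G\<in>Pow A. a ^ card G * b ^ (card A - card G)) = (a + b) ^ card A"
proof -
  have "(a + b) ^ card A = (\<Prod>x\<in>A. a + b)" by simp
  also have "\<dots> = (\<Sum>X\<in>Pow A. (\<Prod>x\<in>X. a) * (\<Prod>x\<in>A-X. b))"
    by (rule prod_add[OF assms])
  also have "\<dots> = (\<Sum>G\<in>Pow A. a ^ card G * b ^ (card A - card G))"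
  proof (rule sum.cong)
    fix X assume "X \<in> Pow A"
    then have "X \<subseteq> A" by auto
    then have "card (A - X) = card A - card X" using assms
      by (simp add: card_Diff_subset finite_subset)
    then show "(\<Prod>x\<in>X. a) * (\<Prod>x\<in>A-X. b) = a ^ card X * b ^ (card A - card X)"
      by simp
  qed simp
  finally show ?thesis by simp
qed

lemma rel_formula:
  assumes "s \<noteq> t" and fin: "finite E"
  shows "reliability E s t 1 \<rho> = (if {s, t} \<in> E then 1 - \<rho> else 0)"
proof -
  have eq: "{F. F \<subseteq> E \<and> d_pathset E s t 1 F} = {F. F \<subseteq> E \<and> {s, t} \<in> F}"
    using pathset1_iff[OF assms(1)] by auto
  show ?thesis
  proof (cases "{s, t} \<in> E")
    case False
    then have emp: "{F. F \<subseteq> E \<and> {s, t} \<in> F} = {}" by auto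
    show ?thesis unfolding reliability_def eq emp using False by simp
  next
    case True
    define e where "e = {s, t}"
    define A where "A = E - {e}"
    have finA: "finite A" using fin A_def by simp
    have eE: "e \<in> E" using True e_def by simp
    have cE: "card E = Suc (card A)" unfolding A_def by (rule card.remove[OF fin eE])
    have img: "{F. F \<subseteq> E \<and> e \<in> F} = insert e ` Pow A"
    proof
      show "{F. F \<subseteq> E \<and> e \<in> F} \<subseteq> insert e ` Pow A"
      proof
        fix F assume "F \<in> {F. F \<subseteq> E \<and> e \<in> F}"
        then have "F = insert e (F - {e})" "F - {e} \<in> Pow A" unfolding A_def by auto
        then show "F \<in> insert e ` Pow A" by blast
      qed
    qed (use True e_def A_def in auto)
    have inj: "inj_on (insert e) (Pow A)" unfolding A_def inj_on_def by blast
    have "reliability E s t 1 \<rho> = (\<Sum>F\<in>insert e ` Pow A. (1 - \<rho>) ^ card F * \<rho> ^ (card E - card F))"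
      unfolding reliability_def eq e_def[symmetric] img ..
    also have "\<dots> = (\<Sum>G\<in>Pow A. (1 - \<rho>) ^ card (insert e G) * \<rho> ^ (card E - card (insert e G)))"
      by (rule sum.reindex_cong[OF inj refl]) simp
    also have "\<dots> = (\<Sum>G\<in>Pow A. (1 - \<rho>) * ((1 - \<rho>) ^ card G * \<rho> ^ (card A - card G)))"
    proof (rule sum.cong)
      fix G assume "G \<in> Pow A"
      then have "G \<subseteq> A" "e \<notin> G" "finite G" using A_def finA finite_subset by auto
      then have "card (insert e G) = Suc (card G)" by simp
      then show "(1 - \<rho>) ^ card (insert e G) * \<rho> ^ (card E - card (insert e G)) =
        (1 - \<rho>) * ((1 - \<rho>) ^ card G * \<rho> ^ (card A - card G))" using cE by simp
    qed simp
    also have "\<dots> = (1 - \<rho>) * (\<Sum>G\<in>Pow A. (1 - \<rho>) ^ card G * \<rho> ^ (card A - card G))"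
      by (simp add: sum_distrib_left)
    also have "\<dots> = 1 - \<rho>" using sum_pow_binom[OF finA, of "1 - \<rho>" \<rho>] by simp
    finally show ?thesis using True by simp
  qed
qed

lemma two_terminal_finE:
  assumes "two_terminal V E s t" shows "finite E"
proof -
  have "E \<subseteq> Pow V" using assms unfolding two_terminal_def by auto
  then show ?thesis using assms unfolding two_terminal_def by (meson finite_Pow_iff finite_subset)
qed

theorem corollary1:
  fixes n m :: nat and V :: "'a set" and E :: "'a set set" and s t :: 'a
  assumes "n \<ge> 2" and "1 \<le> m" and "m \<le> n choose 2"
    and "two_terminal V E s t" and "card V = n" and "card E = m"
  shows "UMRTTG n m 1 V E s t \<longleftrightarrow> {s, t} \<in> E"
proof
  assume U: "UMRTTG n m 1 V E s t"
  have st: "s \<noteq> t" and finV: "finite V" and sV: "s \<in> V" and tV: "t \<in> V"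
    using assms(4) unfolding two_terminal_def by auto
  define P where "P = {{u, v} | u v. u \<in> V \<and> v \<in> V \<and> u \<noteq> v}"
  have P_eq: "P = {B. B \<subseteq> V \<and> card B = 2}"
    unfolding P_def by (auto simp: card_2_iff)
  have cP: "card P = n choose 2" using n_subsets[OF finV, of 2] P_eq assms(5) by simp
  have finP: "finite P" using P_eq finV by simp
  have eP: "{s, t} \<in> P" unfolding P_def using st sV tV by blast
  have "m - 1 \<le> card (P - {{s, t}})" using cP eP finP assms(3) by simp
  then obtain S where S: "S \<subseteq> P - {{s, t}}" "card S = m - 1" "finite S"
    by (meson obtain_subset_with_card_n)
  define E' where "E' = insert {s, t} S"
  have "{s, t} \<notin> S" using S by blast
  then have cE': "card E' = m" unfolding E'_def using S assms(2) by simp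
  have tt: "two_terminal V E' s t" using assms(4) S eP unfolding two_terminal_def E'_def P_def
    by auto
  have "\<forall>\<rho>::real. 0 \<le> \<rho> \<and> \<rho> \<le> 1 \<longrightarrow> reliability E s t 1 \<rho> \<ge> reliability E' s t 1 \<rho>"
    using U tt cE' assms(5) unfolding UMRTTG_def by blast
  then have "reliability E s t 1 0 \<ge> reliability E' s t 1 0" by simp
  moreover have "reliability E' s t 1 0 = 1"
    using rel_formula[OF st two_terminal_finE[OF tt]] unfolding E'_def by simp
  ultimately show "{s, t} \<in> E"
    using rel_formula[OF st two_terminal_finE[OF assms(4)]] by (simp split: if_splits)
next
  assume e: "{s, t} \<in> E"
  have st: "s \<noteq> t" using assms(4) unfolding two_terminal_def by auto
  show "UMRTTG n m 1 V E s t"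
    unfolding UMRTTG_def
  proof (intro conjI allI impI)
    fix V' :: "'a set" and E' s' t' and \<rho> :: real
    assume h: "two_terminal V' E' s' t' \<and> card V' = n \<and> card E' = m" "0 \<le> \<rho> \<and> \<rho> \<le> 1"
    have "s' \<noteq> t'" using h unfolding two_terminal_def by auto
    then show "reliability E' s' t' 1 \<rho> \<le> reliability E s t 1 \<rho>"
      using rel_formula[OF st two_terminal_finE[OF assms(4)]]
        rel_formula[OF _ two_terminal_finE[of V' E' s' t']] h e by simp
  qed (use assms in auto)
qed

end
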